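(* Let $D = \bigcup_{k=0}^{5} IPE_k$ be the set of available frequencies, where $IPE_0=\{40000,40070,40140\}$, $IPE_1=\{41000,41070,41140\}$, $IPE_2=\{42000,42070,42140\}$, $IPE_3=\{43000,43070,43140\}$, $IPE_4=\{44000,44070,44140,44210\}$, $IPE_5=\{45000,45070,45140,45210\}$. Let $s$ be a site with exactly 8 transmission paths (paths leaving $s$) and 8 reception paths (paths arriving at $s$), and suppose frequencies $f(t)\in D$ are assigned to these 16 paths such that: (i) any two transmission paths of $s$ satisfy $|f(t)-f(t')|\ge 100$; (ii) any transmission path $t$ and reception path $t'$ of $s$ satisfy $|f(t)-f(t')|\ge 220$; (iii) the 8 reception paths of $s$ receive pairwise distinct frequencies. Then every transmission path of $s$ receives a frequency in $\{40000, 40140, 41000, 41140, 42000, 42140, 43000, 43140\}$, and every reception path of $s$ receives a frequency in $\{44000, 44070, 44140, 44210, 45000, 45070, 45140, 45210\}$.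
   Context: Frequency assignment for a radio network: each link between two sites consists of two paths (one per direction); a path from site $s$ is a transmission path of $s$, a path to site $s$ is a reception path of $s$. Constraints between paths incident to the same site ("co-site" constraints) impose minimum frequency gaps: 100 between two transmitters, 220 between a transmitter and a receiver, and a (small, positive) gap between two receivers. The six sets $IPE_k$ are called inter-planes; $IPE_0,\dots,IPE_3$ are "small" (3 frequencies) and $IPE_4,IPE_5$ are "large" (4 frequencies). A site with 8 links is called a $Cart8$ site. *)

theory Defs
  imports Main
begin

definition IPE :: "nat \<Rightarrow> int set" where
  "IPE k = (if k = 0 then {40000, 40070, 40140}
       else if k = 1 then {41000, 41070, 41140}
       else if k = 2 then {42000, 42070, 42140}
       else if k = 3 then {43000, 43070, 43140}
       else if k = 4 then {44000, 44070, 44140, 44210}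
       else if k = 5 then {45000, 45070, 45140, 45210}
       else {})"

definition D :: "int set" where
  "D = (\<Union>k\<in>{0..5}. IPE k)"

end

theory Submission
  imports Defs
begin

lemma gen3:
  fixes b x y z :: int
  assumes "x \<in> {b, b+70, b+140, b+210}" "y \<in> {b, b+70, b+140, b+210}" "z \<in> {b, b+70, b+140, b+210}"
   "x\<noteq>y" "x\<noteq>z" "y\<noteq>z" "\<bar>x - y\<bar> \<ge> 100" "\<bar>x - z\<bar> \<ge> 100" "\<bar>y - z\<bar> \<ge> 100"
  shows False
  using assms by auto

lemma k6: "(k::nat) \<le> 5 \<Longrightarrow> k = 0 \<or> k = 1 \<or> k = 2 \<or> k = 3 \<or> k = 4 \<or> k = 5" by auto

lemma IPE_sub: "k \<le> 5 \<Longrightarrow> IPE k \<subseteq> {40000 + 1000 * int k, 40000 + 1000 * int k+70, 40000 + 1000 * int k+140, 40000 + 1000 * int k+210}"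
  by (drule k6) (auto simp: IPE_def)

lemma k4: "(k::nat) \<le> 3 \<Longrightarrow> k = 0 \<or> k = 1 \<or> k = 2 \<or> k = 3" by auto

lemma IPE_sub3: "k \<le> 3 \<Longrightarrow> IPE k \<subseteq> {40000 + 1000 * int k, 40000 + 1000 * int k+70, 40000 + 1000 * int k+140}"
  by (drule k4) (auto simp: IPE_def)

lemma IPE_out: "k \<ge> 6 \<Longrightarrow> IPE k = {}" by (simp add: IPE_def)

lemma IPE_fin: "finite (IPE k)" by (simp add: IPE_def)

lemma IPE_card3: "k \<le> 3 \<Longrightarrow> card (IPE k) \<le> 3"
  by (drule k4) (auto simp: IPE_def)

lemma IPE_card4: "card (IPE k) \<le> 4"
  by (cases "k = 0 \<or> k = 1 \<or> k = 2 \<or> k = 3 \<or> k = 4 \<or> k = 5") (auto simp: IPE_def)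

lemma IPE_close: "k \<le> 5 \<Longrightarrow> x \<in> IPE k \<Longrightarrow> y \<in> IPE k \<Longrightarrow> \<bar>x - y\<bar> \<le> 210"
proof -
  assume h: "k \<le> 5" "x \<in> IPE k" "y \<in> IPE k"
  have "x \<in> {40000 + 1000 * int k, 40000 + 1000 * int k+70, 40000 + 1000 * int k+140, 40000 + 1000 * int k+210}"
       "y \<in> {40000 + 1000 * int k, 40000 + 1000 * int k+70, 40000 + 1000 * int k+140, 40000 + 1000 * int k+210}"
    using IPE_sub[OF h(1)] h(2,3) by blast+
  then show ?thesis by auto
qed

lemma IPE_disj: "k \<le> 5 \<Longrightarrow> j \<le> 5 \<Longrightarrow> k \<noteq> j \<Longrightarrow> IPE k \<inter> IPE j = {}"
proof (rule ccontr)
  assume a: "k \<le> 5" "j \<le> 5" "k \<noteq> j" "IPE k \<inter> IPE j \<noteq> {}"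
  then obtain x where x: "x \<in> IPE k" "x \<in> IPE j" by auto
  have "k < j \<or> j < k" using a by auto
  then have "1000 * int k + 1000 \<le> 1000 * int j \<or> 1000 * int j + 1000 \<le> 1000 * int k" by auto
  moreover have "x \<in> {40000 + 1000 * int k, 40000 + 1000 * int k+70, 40000 + 1000 * int k+140, 40000 + 1000 * int k+210}"
       "x \<in> {40000 + 1000 * int j, 40000 + 1000 * int j+70, 40000 + 1000 * int j+140, 40000 + 1000 * int j+210}"
    using IPE_sub[OF a(1)] IPE_sub[OF a(2)] x by blast+
  ultimately show False by auto
qed

lemma three_elems:
  assumes "3 \<le> card X" obtains x y z where "x\<in>X" "y\<in>X" "z\<in>X" "x\<noteq>y" "x\<noteq>z" "y\<noteq>z"
proof -
  from assms obtain a B where "X = insert a B" "a\<notin>B" "2 \<le> card B"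
    using card_le_Suc_iff[of 2 X] by auto
  moreover from this obtain b C where "B = insert b C" "b \<notin> C" "1 \<le> card C"
    using card_le_Suc_iff[of 1 B] by auto
  moreover from this obtain c E where "C = insert c E" "c \<notin> E"
    using card_le_Suc_iff[of 0 C] by auto
  ultimately show ?thesis using that[of a b c] by auto
qed

lemma smallcard:
  fixes X :: "int set"
  assumes "k \<le> 5" "X \<subseteq> IPE k" "\<forall>x\<in>X. \<forall>y\<in>X. x \<noteq> y \<longrightarrow> \<bar>x - y\<bar> \<ge> 100"
  shows "card X \<le> 2"
proof (rule ccontr)
  assume "\<not> card X \<le> 2"
  then have "3 \<le> card X" by simp
  then obtain x y z where h: "x\<in>X" "y\<in>X" "z\<in>X" "x\<noteq>y" "x\<noteq>z" "y\<noteq>z"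
    by (rule three_elems)
  have g: "\<bar>x - y\<bar> \<ge> 100" "\<bar>x - z\<bar> \<ge> 100" "\<bar>y - z\<bar> \<ge> 100"
    using assms(3) h by blast+
  have s: "X \<subseteq> {40000 + 1000 * int k, 40000 + 1000 * int k+70, 40000 + 1000 * int k+140, 40000 + 1000 * int k+210}"
    using assms(2) IPE_sub[OF assms(1)] by (rule order.trans)
  show False
    by (rule gen3[OF subsetD[OF s h(1)] subsetD[OF s h(2)] subsetD[OF s h(3)] h(4-6) g])
qed

lemma midcard:
  fixes X :: "int set"
  assumes "k \<le> 3" "X \<subseteq> IPE k" "\<forall>x\<in>X. \<forall>y\<in>X. x \<noteq> y \<longrightarrow> \<bar>x - y\<bar> \<ge> 100"
    "40070 + 1000 * int k \<in> X"
  shows "card X \<le> 1"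
proof -
  have "X \<subseteq> {40070 + 1000 * int k}"
  proof
    fix x assume x: "x \<in> X"
    then have "x \<in> {40000 + 1000 * int k, 40000 + 1000 * int k+70, 40000 + 1000 * int k+140}"
      using assms(2) IPE_sub3[OF assms(1)] x by blast
    moreover have "x \<noteq> 40070 + 1000 * int k \<Longrightarrow> \<bar>x - (40070 + 1000 * int k)\<bar> \<ge> 100"
      using assms(3,4) x by blast
    ultimately show "x \<in> {40070 + 1000 * int k}" by auto
  qed
  then have "card X \<le> card {40070 + 1000 * int k}" by (rule card_mono[rotated]) simp
  then show ?thesis by simp
qed

lemma arith_core: "(a0::nat) + a1 + a2 + a3 + a4 + a5 = 8 \<Longrightarrow> b0 + b1 + b2 + b3 + b4 + b5 = (8::nat) \<Longrightarrow>
 a0 \<le> 2 \<Longrightarrow> a1 \<le> 2 \<Longrightarrow> a2 \<le> 2 \<Longrightarrow> a3 \<le> 2 \<Longrightarrow> a4 \<le> 2 \<Longrightarrow> a5 \<le> 2 \<Longrightarrow>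
 b0 \<le> 3 \<Longrightarrow> b1 \<le> 3 \<Longrightarrow> b2 \<le> 3 \<Longrightarrow> b3 \<le> 3 \<Longrightarrow> b4 \<le> 4 \<Longrightarrow> b5 \<le> 4 \<Longrightarrow>
 a0 = 0 \<or> b0 = 0 \<Longrightarrow> a1 = 0 \<or> b1 = 0 \<Longrightarrow> a2 = 0 \<or> b2 = 0 \<Longrightarrow> a3 = 0 \<or> b3 = 0 \<Longrightarrow> a4 = 0 \<or> b4 = 0 \<Longrightarrow> a5 = 0 \<or> b5 = 0 \<Longrightarrow>
 a4 = 0 \<and> a5 = 0 \<and> b0 = 0 \<and> b1 = 0 \<and> b2 = 0 \<and> b3 = 0 \<and> a0 = 2 \<and> a1 = 2 \<and> a2 = 2 \<and> a3 = 2"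
  by (elim disjE; simp)

lemma zero_out: "card (X \<inter> IPE k) = 0 \<Longrightarrow> x \<in> X \<Longrightarrow> x \<notin> IPE k"
  using IPE_fin[of k] by auto

lemma s6: "{0..5::nat} = {0,1,2,3,4,5}" by auto

theorem mainTheorem1:
  fixes T R :: "'p set" and f :: "'p \<Rightarrow> int"
  assumes "finite T" "finite R" "card T = 8" "card R = 8" "T \<inter> R = {}"
    and "\<forall>p\<in>T \<union> R. f p \<in> D"
    and "\<forall>t\<in>T. \<forall>t'\<in>T. t \<noteq> t' \<longrightarrow> \<bar>f t - f t'\<bar> \<ge> 100"
    and "\<forall>t\<in>T. \<forall>t'\<in>R. \<bar>f t - f t'\<bar> \<ge> 220"
    and "inj_on f R"
  shows "(\<forall>t\<in>T. f t \<in> {40000, 40140, 41000, 41140, 42000, 42140, 43000, 43140}) \<and>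
         (\<forall>r\<in>R. f r \<in> {44000, 44070, 44140, 44210, 45000, 45070, 45140, 45210})"
proof -
  define A where "A = f ` T"
  define B where "B = f ` R"
  have injT: "inj_on f T" unfolding inj_on_def
  proof (intro ballI impI)
    fix x y assume xy: "x \<in> T" "y \<in> T" "f x = f y"
    show "x = y"
    proof (rule ccontr)
      assume "x \<noteq> y"
      then have "\<bar>f x - f y\<bar> \<ge> 100" using assms(7) xy(1,2) by blast
      then show False using xy(3) by simp
    qed
  qed
  have cA: "card A = 8" using card_image[OF injT] assms(3) A_def by simp
  have cB: "card B = 8" using card_image[OF assms(9)] assms(4) B_def by simp
  have AD: "A \<subseteq> D" using assms(6) unfolding A_def by blast
  have BD: "B \<subseteq> D" using assms(6) unfolding B_def by blast
  have gapA: "\<forall>x\<in>A. \<forall>y\<in>A. x \<noteq> y \<longrightarrow> \<bar>x - y\<bar> \<ge> 100"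
    unfolding A_def ball_simps(9)
  proof (intro ballI impI)
    fix t t' assume h: "t \<in> T" "t' \<in> T" "f t \<noteq> f t'"
    then have "t \<noteq> t'" by blast
    then show "\<bar>f t - f t'\<bar> \<ge> 100" using assms(7) h(1,2) by blast
  qed
  have gapAB: "\<forall>x\<in>A. \<forall>y\<in>B. \<bar>x - y\<bar> \<ge> 220"
    unfolding A_def B_def ball_simps(9) using assms(8) by blast
  define a where "a k = card (A \<inter> IPE k)" for k
  define b where "b k = card (B \<inter> IPE k)" for k
  have decomp: "card X = (\<Sum>k\<in>{0..5}. card (X \<inter> IPE k))" if "X \<subseteq> D" for X
  proof -
    have "X \<subseteq> (\<Union>k\<in>{0..5}. IPE k)" using that unfolding D_def .
    then have "X = (\<Union>k\<in>{0..5}. X \<inter> IPE k)" by blast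
    then have "card X = card (\<Union>k\<in>{0..5}. X \<inter> IPE k)" by (rule arg_cong)
    also have "\<dots> = (\<Sum>k\<in>{0..5}. card (X \<inter> IPE k))"
    proof (rule card_UN_disjoint)
      show "finite {0..5::nat}" by simp
      show "\<forall>i\<in>{0..5}. finite (X \<inter> IPE i)" by (simp add: IPE_fin)
      show "\<forall>i\<in>{0..5}. \<forall>j\<in>{0..5}. i \<noteq> j \<longrightarrow> X \<inter> IPE i \<inter> (X \<inter> IPE j) = {}"
      proof (intro ballI impI)
        fix i j :: nat assume h: "i \<in> {0..5}" "j \<in> {0..5}" "i \<noteq> j"
        have "IPE i \<inter> IPE j = {}" using h by (intro IPE_disj) auto
        then show "X \<inter> IPE i \<inter> (X \<inter> IPE j) = {}" by blast
      qed
    qed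
    finally show ?thesis .
  qed
  have sA: "a 0 + a 1 + a 2 + a 3 + a 4 + a 5 = 8"
    using decomp[OF AD] cA unfolding a_def s6 by simp
  have sB: "b 0 + b 1 + b 2 + b 3 + b 4 + b 5 = 8"
    using decomp[OF BD] cB unfolding b_def s6 by simp
  have a2: "a k \<le> 2" if "k \<le> 5" for k
    unfolding a_def by (rule smallcard[OF that]) (simp, use gapA in blast)
  have b3: "b k \<le> 3" if "k \<le> 3" for k
    unfolding b_def using IPE_card3[OF that] card_mono[OF IPE_fin, of "B \<inter> IPE k" k] by simp
  have b4: "b k \<le> 4" for k
    unfolding b_def using IPE_card4[of k] card_mono[OF IPE_fin, of "B \<inter> IPE k" k] by simp
  have ab: "a k = 0 \<or> b k = 0" if "k \<le> 5" for k
  proof (rule ccontr)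
    assume "\<not> (a k = 0 \<or> b k = 0)"
    then obtain x y where xy: "x \<in> A \<inter> IPE k" "y \<in> B \<inter> IPE k" unfolding a_def b_def
      by (metis card.empty ex_in_conv)
    then have "\<bar>x - y\<bar> \<ge> 220" using gapAB by blast
    moreover have "\<bar>x - y\<bar> \<le> 210" using IPE_close[OF that, of x y] xy by blast
    ultimately show False by simp
  qed
  have res: "a 4 = 0 \<and> a 5 = 0 \<and> b 0 = 0 \<and> b 1 = 0 \<and> b 2 = 0 \<and> b 3 = 0 \<and>
     a 0 = 2 \<and> a 1 = 2 \<and> a 2 = 2 \<and> a 3 = 2"
    using arith_core[OF sA sB a2[of 0] a2[of 1] a2[of 2] a2[of 3] a2[of 4] a2[of 5]
      b3[of 0] b3[of 1] b3[of 2] b3[of 3] b4[of 4] b4[of 5]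
      ab[of 0] ab[of 1] ab[of 2] ab[of 3] ab[of 4] ab[of 5]] by simp
  have inIPE: "\<exists>k\<le>5. x \<in> IPE k" if "x \<in> D" for x
    using that by (auto simp: D_def)
  have part1: "f t \<in> {40000, 40140, 41000, 41140, 42000, 42140, 43000, 43140}" if t: "t \<in> T" for t
  proof -
    have x: "f t \<in> A" using t A_def by auto
    then obtain k where k: "k \<le> 5" "f t \<in> IPE k" using inIPE AD by blast
    have "k \<noteq> 4" "k \<noteq> 5" using res zero_out[OF _ x] k unfolding a_def by auto
    then have k3: "k \<le> 3" using k by auto
    have "a k = 2" using res k4[OF k3] by auto
    moreover have "40070 + 1000 * int k \<in> A \<inter> IPE k \<Longrightarrow> card (A \<inter> IPE k) \<le> 1"
      by (rule midcard[OF k3]) (simp, use gapA in blast, assumption)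
    ultimately have "f t \<noteq> 40070 + 1000 * int k" using x k unfolding a_def by auto
    moreover have "f t \<in> {40000 + 1000 * int k, 40000 + 1000 * int k+70, 40000 + 1000 * int k+140}"
      using IPE_sub3[OF k3] k(2) by blast
    ultimately have "f t = 40000 + 1000 * int k \<or> f t = 40140 + 1000 * int k" by auto
    then show ?thesis using k4[OF k3] by auto
  qed
  have part2: "f r \<in> {44000, 44070, 44140, 44210, 45000, 45070, 45140, 45210}" if r: "r \<in> R" for r
  proof -
    have x: "f r \<in> B" using r B_def by auto
    then obtain k where k: "k \<le> 5" "f r \<in> IPE k" using inIPE BD by blast
    have "\<not> k \<le> 3"
    proof
      assume k3: "k \<le> 3"
      then have "b k = 0" using res k4[OF k3] by auto
      then show False using zero_out[OF _ x, of k] k(2) unfolding b_def by blast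
    qed
    then have "k = 4 \<or> k = 5" using k by auto
    then show ?thesis using k by (auto simp: IPE_def)
  qed
  show ?thesis using part1 part2 by blast
qed

end
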